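(* Let $\theta=(k_r)$ be a lacunary sequence, $m\ge0$ an integer, $0<\beta\le1$ and $0<p<\infty$. If $\liminf_r q_r>1$, then $w_p^\beta(F,\Delta^m)\subseteq N_\theta^\beta(p,F,\Delta^m)$.
   Context: A fuzzy number is a map $X:\mathbb{R}\to[0,1]$ which is normal, fuzzy convex, upper semicontinuous, with compact closure of $\{t:X(t)>0\}$; $L(\mathbb{R})$ is the set of fuzzy numbers. Level sets $[X]^\alpha=\{t:X(t)\ge\alpha\}$ ($\alpha\in(0,1]$), $[X]^0=\overline{\{t:X(t)>0\}}$, are compact intervals $[u^\alpha,v^\alpha]$. Subtraction: $[X-Y]^\alpha=[u_1^\alpha-v_2^\alpha,v_1^\alpha-u_2^\alpha]$. Metric: $d(X,Y)=\sup_{\alpha\in[0,1]}\max\{|u_1^\alpha-u_2^\alpha|,|v_1^\alpha-v_2^\alpha|\}$. $(\Delta^0X)_k=X_k$, $(\Delta^1X)_k=X_k-X_{k+1}$, $(\Delta^mX)_k=(\Delta^1(\Delta^{m-1}X))_k$. A lacunary sequence is an increasing integer sequence $\theta=(k_r)_{r\ge0}$ with $k_0=0$, $h_r=k_r-k_{r-1}\to\infty$; $I_r=(k_{r-1},k_r]$, $q_r=k_r/k_{r-1}$. $N_\theta^\beta(p,F,\Delta^m)$: sequences $X$ of fuzzy numbers with some $X_0\in L(\mathbb{R})$ such that $\lim_r\frac{1}{h_r^\beta}\sum_{k\in I_r}d(\Delta^mX_k,X_0)^p=0$. $w_p^\beta(F,\Delta^m)$: sequences $X$ with some $X_0\in L(\mathbb{R})$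 such that $\lim_{n\to\infty}\frac{1}{n^\beta}\sum_{k=1}^n d(\Delta^mX_k,X_0)^p=0$. *)

theory Defs
  imports "HOL-Analysis.Analysis"
begin

type_synonym fuzzy = "real \<Rightarrow> real"

definition usc :: "fuzzy \<Rightarrow> bool" where
  "usc X \<longleftrightarrow> (\<forall>t a. X t < a \<longrightarrow> (\<exists>e>0. \<forall>s. \<bar>s - t\<bar> < e \<longrightarrow> X s < a))"

definition fuzzy_number :: "fuzzy \<Rightarrow> bool" where
  "fuzzy_number X \<longleftrightarrow>
     (\<forall>t. 0 \<le> X t \<and> X t \<le> 1) \<and>
     (\<exists>t. X t = 1) \<and>
     (\<forall>s t (l::real). 0 \<le> l \<and> l \<le> 1 \<longrightarrow> min (X s) (X t) \<le> X (l * s + (1 - l) * t)) \<and>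
     usc X \<and>
     compact (closure {t. X t > 0})"

definition level :: "fuzzy \<Rightarrow> real \<Rightarrow> real set" where
  "level X a = (if a = 0 then closure {t. X t > 0} else {t. X t \<ge> a})"

definition lo :: "fuzzy \<Rightarrow> real \<Rightarrow> real" where
  "lo X a = Inf (level X a)"

definition hi :: "fuzzy \<Rightarrow> real \<Rightarrow> real" where
  "hi X a = Sup (level X a)"

text \<open>Subtraction: the fuzzy number whose alpha-level sets are
  [lo X a - hi Y a, hi X a - lo Y a]; it is recovered from its level sets by
  Z t = sup {a : t in [Z]^a}.\<close>
definition fuzzy_sub :: "fuzzy \<Rightarrow> fuzzy \<Rightarrow> fuzzy" where
  "fuzzy_sub X Y = (\<lambda>t. Sup ({0} \<union> {a. 0 < a \<and> a \<le> 1 \<and>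
        t \<in> {lo X a - hi Y a .. hi X a - lo Y a}}))"

definition fdist :: "fuzzy \<Rightarrow> fuzzy \<Rightarrow> real" where
  "fdist X Y = (SUP a\<in>{0..1}. max \<bar>lo X a - lo Y a\<bar> \<bar>hi X a - hi Y a\<bar>)"

fun fdelta :: "nat \<Rightarrow> (nat \<Rightarrow> fuzzy) \<Rightarrow> nat \<Rightarrow> fuzzy" where
  "fdelta 0 X k = X k"
| "fdelta (Suc m) X k = fuzzy_sub (fdelta m X k) (fdelta m X (Suc k))"

definition lacunary :: "(nat \<Rightarrow> nat) \<Rightarrow> bool" where
  "lacunary \<theta> \<longleftrightarrow> strict_mono \<theta> \<and> \<theta> 0 = 0 \<and>
     filterlim (\<lambda>r. real (\<theta> (Suc r) - \<theta> r)) at_top sequentially"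

text \<open>h_r for r \<ge> 1 is indexed here as h (Suc r') etc.\<close>
definition N_theta :: "(nat \<Rightarrow> nat) \<Rightarrow> real \<Rightarrow> real \<Rightarrow> nat \<Rightarrow> (nat \<Rightarrow> fuzzy) set" where
  "N_theta \<theta> \<beta> p m = {X. (\<forall>k. fuzzy_number (X k)) \<and>
     (\<exists>L. fuzzy_number L \<and>
        (\<lambda>r. (1 / real (\<theta> (Suc r) - \<theta> r) powr \<beta>) *
              (\<Sum>k\<in>{\<theta> r<..\<theta> (Suc r)}. fdist (fdelta m X k) L powr p)) \<longlonglongrightarrow> 0)}"

definition w_space :: "real \<Rightarrow> real \<Rightarrow> nat \<Rightarrow> (nat \<Rightarrow> fuzzy) set" where
  "w_space p \<beta> m = {X. (\<forall>k. fuzzy_number (X k)) \<and>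
     (\<exists>L. fuzzy_number L \<and>
        (\<lambda>n. (1 / real n powr \<beta>) *
              (\<Sum>k=1..n. fdist (fdelta m X k) L powr p)) \<longlonglongrightarrow> 0)}"

end

theory Submission
  imports Defs
begin

theorem theorem2p14:
  fixes \<theta> :: "nat \<Rightarrow> nat" and m :: nat and \<beta> p :: real
  assumes "lacunary \<theta>"
    and "0 < \<beta>" and "\<beta> \<le> 1" and "0 < p"
    and "liminf (\<lambda>r. ereal (real (\<theta> (Suc r)) / real (\<theta> r))) > 1"
  shows "w_space p \<beta> m \<subseteq> N_theta \<theta> \<beta> p m"
proof
  fix X assume "X \<in> w_space p \<beta> m"
  then obtain L where fn: "\<forall>k. fuzzy_number (X k)" and L: "fuzzy_number L"
    and lim: "(\<lambda>n. (1 / real n powr \<beta>) *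
              (\<Sum>k=1..n. fdist (fdelta m X k) L powr p)) \<longlonglongrightarrow> 0"
    unfolding w_space_def by blast
  define a where "a k = fdist (fdelta m X k) L powr p" for k
  define S where "S n = (\<Sum>k=1..n. a k)" for n
  have a0: "0 \<le> a k" for k unfolding a_def by (rule powr_ge_zero)
  have sm: "strict_mono \<theta>" and t0: "\<theta> 0 = 0" using assms(1) unfolding lacunary_def by auto
  obtain c :: real where c1: "1 < c" and cl: "ereal c < liminf (\<lambda>r. ereal (real (\<theta> (Suc r)) / real (\<theta> r)))"
  proof -
    from ereal_dense2[OF assms(5)] obtain z where "1 < ereal z" "ereal z < liminf (\<lambda>r. ereal (real (\<theta> (Suc r)) / real (\<theta> r)))"
      by blast
    then show ?thesis using that by simp
  qed
  have ev: "eventually (\<lambda>r. ereal c < ereal (real (\<theta> (Suc r)) / real (\<theta> r))) sequentially"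
    by (rule less_LiminfD[OF cl])
  define C where "C = 1 / ((c - 1) / c) powr \<beta>"
  have Cpos: "0 \<le> C" unfolding C_def by simp
  have bound: "eventually (\<lambda>r. (1 / real (\<theta> (Suc r) - \<theta> r) powr \<beta>) * (\<Sum>k\<in>{\<theta> r<..\<theta> (Suc r)}. a k)
        \<le> C * ((1 / real (\<theta> (Suc r)) powr \<beta>) * S (\<theta> (Suc r)))) sequentially"
    using ev
  proof eventually_elim
    case (elim r)
    have q: "c < real (\<theta> (Suc r)) / real (\<theta> r)" using elim by simp
    have tr: "0 < real (\<theta> r)"
    proof (rule ccontr)
      assume "\<not> 0 < real (\<theta> r)" then have "real (\<theta> r) = 0" by simp
      with q c1 show False by simp
    qed
    define T where "T = real (\<theta> (Suc r))"
    define t where "t = real (\<theta> r)"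
    have Tt: "c * t < T" using q tr unfolding T_def t_def by (simp add: field_simps)
    have tT: "\<theta> r < \<theta> (Suc r)" using sm by (simp add: strict_mono_def)
    have h: "real (\<theta> (Suc r) - \<theta> r) = T - t" using tT unfolding T_def t_def by simp
    have Tpos: "0 < T" using Tt tr c1 unfolding t_def
      by (metis less_trans mult_pos_pos zero_less_one)
    have hge: "T * ((c - 1) / c) \<le> T - t"
    proof -
      have "T * ((c - 1) / c) = T - T / c" using c1 by (simp add: field_simps)
      moreover have "t \<le> T / c" using Tt c1 by (simp add: field_simps)
      ultimately show ?thesis by simp
    qed
    have cpos: "0 < (c - 1) / c" using c1 by simp
    have "(T * ((c - 1) / c)) powr \<beta> \<le> (T - t) powr \<beta>"
      by (rule powr_mono2) (use assms(2) Tpos cpos hge in \<open>auto simp del: times_divide_eq_right\<close>)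
    hence "T powr \<beta> * ((c - 1) / c) powr \<beta> \<le> (T - t) powr \<beta>"
      using Tpos cpos by (simp only: powr_mult)
    moreover have pp: "0 < T powr \<beta> * ((c - 1) / c) powr \<beta>"
      using Tpos cpos c1 by (intro mult_pos_pos) simp_all
    ultimately have "1 / (T - t) powr \<beta> \<le> 1 / (T powr \<beta> * ((c - 1) / c) powr \<beta>)"
      by (intro divide_left_mono) (auto intro!: mult_pos_pos simp del: times_divide_eq_right)
    hence h1: "1 / (T - t) powr \<beta> \<le> C * (1 / T powr \<beta>)"
      unfolding C_def by (simp add: mult.commute)
    have h2: "(\<Sum>k\<in>{\<theta> r<..\<theta> (Suc r)}. a k) \<le> S (\<theta> (Suc r))"
      unfolding S_def by (rule sum_mono2) (auto intro: a0)
    have "(1 / (T - t) powr \<beta>) * (\<Sum>k\<in>{\<theta> r<..\<theta> (Suc r)}. a k)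
          \<le> (C * (1 / T powr \<beta>)) * S (\<theta> (Suc r))"
      by (rule mult_mono[OF h1 h2]) (auto intro: sum_nonneg a0 Cpos divide_nonneg_nonneg)
    then show ?case by (simp only: mult.assoc h T_def)
  qed
  have lim2: "(\<lambda>r. C * ((1 / real (\<theta> (Suc r)) powr \<beta>) * S (\<theta> (Suc r)))) \<longlonglongrightarrow> 0"
  proof -
    have sm2: "strict_mono (\<lambda>r. \<theta> (Suc r))" using sm by (simp add: strict_mono_def)
    have "(\<lambda>n. (1 / real n powr \<beta>) * S n) \<longlonglongrightarrow> 0" using lim unfolding S_def a_def .
    from LIMSEQ_subseq_LIMSEQ[OF this sm2] have "(\<lambda>r. (1 / real (\<theta> (Suc r)) powr \<beta>) * S (\<theta> (Suc r))) \<longlonglongrightarrow> 0"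
      by (simp add: o_def)
    from tendsto_mult_left[OF this, of C] show ?thesis by simp
  qed
  have nn: "eventually (\<lambda>r. 0 \<le> (1 / real (\<theta> (Suc r) - \<theta> r) powr \<beta>) * (\<Sum>k\<in>{\<theta> r<..\<theta> (Suc r)}. a k)) sequentially"
    by (intro always_eventually allI mult_nonneg_nonneg sum_nonneg a0) simp
  have "(\<lambda>r. (1 / real (\<theta> (Suc r) - \<theta> r) powr \<beta>) * (\<Sum>k\<in>{\<theta> r<..\<theta> (Suc r)}. a k)) \<longlonglongrightarrow> 0"
    by (rule tendsto_sandwich[OF nn bound tendsto_const lim2])
  then show "X \<in> N_theta \<theta> \<beta> p m"
    unfolding N_theta_def a_def using fn L by blast
qed

end
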